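(* Let $\sigma_1=\sigma_x,\sigma_2=\sigma_y,\sigma_3=\sigma_z$ and, for $\underline{\lambda}\in\mathbb{R}^3$, $U_{\underline{\lambda}}=\exp\{-i\sum_{j=1}^3\lambda_j\,\sigma_j\otimes\sigma_j\}$. For a normalized two-qubit pure probe $|\psi_0\rangle$ let $Q$ be the quantum Fisher information matrix of the model $\underline{\lambda}\mapsto U_{\underline{\lambda}}|\psi_0\rangle$, let $p=\mathrm{Tr}[Q^{-1}]$ (precision; $p=+\infty$ if $Q$ is singular) and $s=1/\mathrm{Det}[Q]$ (sloppiness). Then for every probe and every $\underline{\lambda}$, $p\ge 3/4$ and $s\ge 1/64$ (i.e. $\mathrm{Det}[Q]\le 64$). Moreover, the following are equivalent for a probe $|\psi_0\rangle$: (i) $p=3/4$; (ii) $s=1/64$; (iii) up to a global phase, in the computational basis $\{|00\rangle,|01\rangle,|10\rangle,|11\rangle\}$, $$|\psi_0\rangle=\Big(\alpha,\ \beta e^{i\phi},\ \pm i\sqrt{\tfrac12-\beta^2}\,e^{i\phi},\ \pm i\sqrt{\tfrac12-\alpha^2}\Big)^T$$ for some $\alpha,\beta\in[0,1/\sqrt2]$, $\phi\in[0,2\pi)$ and independent choices of the two signs. In particular, both optimal values are attained simultaneously, and the optimal set contains product states such as $|0\rangle\otimes\tfrac{1}{\sqrt2}(|0\rangle+e^{i\phi}|1\rangle)$ as well as states of every concurrence in $[0,1]$.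
   Context: For a pure-state model $\underline{\lambda}\mapsto|\psi_{\underline{\lambda}}\rangle$, with $\partial_j=\partial/\partial\lambda_j$, the quantum Fisher information matrix is $Q_{jk}=4\,\mathrm{Re}\big[\langle\partial_j\psi|\partial_k\psi\rangle-\langle\partial_j\psi|\psi\rangle\langle\psi|\partial_k\psi\rangle\big]$. The concurrence of a pure state $\sum_{x,y\in\{0,1\}}a_{xy}|x\rangle|y\rangle$ is $2|a_{00}a_{11}-a_{01}a_{10}|$. *)

theory Defs
  imports "HOL-Analysis.Analysis"
begin

text \<open>Single-qubit states/operators are indexed by the type 2 (elements 0, 1);
  two-qubit ones by 2 \<times> 2, the index (x,y) standing for the basis ket |xy>.\<close>

type_synonym qstate = "complex ^ (2 \<times> 2)"
type_synonym qop = "complex ^ (2 \<times> 2) ^ (2 \<times> 2)"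

definition sigma_x :: "complex ^ 2 ^ 2" where
  "sigma_x = (\<chi> r c. if r \<noteq> c then 1 else 0)"

definition sigma_y :: "complex ^ 2 ^ 2" where
  "sigma_y = (\<chi> r c. if r = 0 \<and> c = 1 then - \<i> else if r = 1 \<and> c = 0 then \<i> else 0)"

definition sigma_z :: "complex ^ 2 ^ 2" where
  "sigma_z = (\<chi> r c. if r = c then (if r = 0 then 1 else -1) else 0)"

text \<open>Index j :: 3 with j = 1, 2, 3 (note 3 = 0 in type 3): sigma_1 = sigma_x, sigma_2 = sigma_y,
  sigma_3 = sigma_z.\<close>
definition pauli :: "3 \<Rightarrow> complex ^ 2 ^ 2" where
  "pauli j = (if j = 1 then sigma_x else if j = 2 then sigma_y else sigma_z)"

definition kron :: "complex ^ 2 ^ 2 \<Rightarrow> complex ^ 2 ^ 2 \<Rightarrow> qop" where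
  "kron A B = (\<chi> r c. A $ fst r $ fst c * B $ snd r $ snd c)"

fun mpow :: "qop \<Rightarrow> nat \<Rightarrow> qop" where
  "mpow A 0 = mat 1"
| "mpow A (Suc n) = A ** mpow A n"

definition mexp :: "qop \<Rightarrow> qop" where
  "mexp A = (\<Sum>n. (1 / fact n) *\<^sub>R mpow A n)"

definition U :: "real ^ 3 \<Rightarrow> qop" where
  "U lam = mexp (\<chi> r c. - \<i> * (\<Sum>j\<in>UNIV. complex_of_real (lam $ j) * kron (pauli j) (pauli j) $ r $ c))"

definition braket :: "qstate \<Rightarrow> qstate \<Rightarrow> complex" where
  "braket a b = (\<Sum>i\<in>UNIV. cnj (a $ i) * b $ i)"

definition normalized :: "qstate \<Rightarrow> bool" where
  "normalized v \<longleftrightarrow> braket v v = 1"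

definition psi :: "qstate \<Rightarrow> real ^ 3 \<Rightarrow> qstate" where
  "psi psi0 lam = U lam *v psi0"

definition dpsi :: "qstate \<Rightarrow> 3 \<Rightarrow> real ^ 3 \<Rightarrow> qstate" where
  "dpsi psi0 j lam = vector_derivative (\<lambda>t. psi psi0 (lam + t *\<^sub>R axis j 1)) (at 0)"

definition QFI :: "qstate \<Rightarrow> real ^ 3 \<Rightarrow> real ^ 3 ^ 3" where
  "QFI psi0 lam = (\<chi> j k. 4 * Re (braket (dpsi psi0 j lam) (dpsi psi0 k lam)
       - braket (dpsi psi0 j lam) (psi psi0 lam) * braket (psi psi0 lam) (dpsi psi0 k lam)))"

definition precision :: "qstate \<Rightarrow> real ^ 3 \<Rightarrow> ereal" where
  "precision psi0 lam = (if invertible (QFI psi0 lam)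
     then ereal (trace (matrix_inv (QFI psi0 lam))) else \<infinity>)"

definition sloppiness :: "qstate \<Rightarrow> real ^ 3 \<Rightarrow> ereal" where
  "sloppiness psi0 lam = (if det (QFI psi0 lam) = 0 then \<infinity>
     else ereal (1 / det (QFI psi0 lam)))"

definition ket :: "complex \<Rightarrow> complex \<Rightarrow> complex \<Rightarrow> complex \<Rightarrow> qstate" where
  "ket a00 a01 a10 a11 = (\<chi> i. if fst i = 0 then (if snd i = 0 then a00 else a01)
                                  else (if snd i = 0 then a10 else a11))"

definition concurrence :: "qstate \<Rightarrow> real" where
  "concurrence v = 2 * cmod (v $ (0,0) * v $ (1,1) - v $ (0,1) * v $ (1,0))"

definition optimal_form :: "qstate \<Rightarrow> bool" where
  "optimal_form v \<longleftrightarrow> (\<exists>c \<alpha> \<beta> \<phi> s1 s2. cmod c = 1 \<and>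
      0 \<le> \<alpha> \<and> \<alpha> \<le> 1 / sqrt 2 \<and> 0 \<le> \<beta> \<and> \<beta> \<le> 1 / sqrt 2 \<and>
      0 \<le> \<phi> \<and> \<phi> < 2 * pi \<and> s1 \<in> {1, -1} \<and> s2 \<in> {1, -1} \<and>
      v = c *s ket (complex_of_real \<alpha>)
                   (complex_of_real \<beta> * cis \<phi>)
                   (complex_of_real s1 * \<i> * complex_of_real (sqrt (1/2 - \<beta>\<^sup>2)) * cis \<phi>)
                   (complex_of_real s2 * \<i> * complex_of_real (sqrt (1/2 - \<alpha>\<^sup>2))))"

end

theory Submission
  imports Defs
begin

lemma two_cases: "(x::2) = 0 \<or> x = 1"
  using exhaust_2[of x] by auto
lemma ne01[simp]: "(0::2) \<noteq> 1" "(1::2) \<noteq> 0" by simp_all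
lemma ne4[simp]: "(1::4) \<noteq> 2" "(1::4) \<noteq> 3" "(1::4) \<noteq> 4" "(2::4) \<noteq> 3" "(2::4) \<noteq> 4" "(3::4) \<noteq> 4"
  "(2::4) \<noteq> 1" "(3::4) \<noteq> 1" "(4::4) \<noteq> 1" "(3::4) \<noteq> 2" "(4::4) \<noteq> 2" "(4::4) \<noteq> 3"
  by simp_all
lemma ne3[simp]: "(1::3) \<noteq> 2" "(1::3) \<noteq> 3" "(2::3) \<noteq> 3" "(2::3) \<noteq> 1" "(3::3) \<noteq> 1" "(3::3) \<noteq> 2"
  by simp_all

definition bell :: "4 \<Rightarrow> 2\<times>2 \<Rightarrow> real" where
  "bell k r = (if k = 1 then (if r = (0,0) \<or> r = (1,1) then 1 / sqrt 2 else 0)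
     else if k = 2 then (if r = (0,0) then 1 / sqrt 2 else if r = (1,1) then - 1 / sqrt 2 else 0)
     else if k = 3 then (if r = (0,1) \<or> r = (1,0) then 1 / sqrt 2 else 0)
     else (if r = (0,1) then 1 / sqrt 2 else if r = (1,0) then - 1 / sqrt 2 else 0))"

definition ev :: "3 \<Rightarrow> 4 \<Rightarrow> real" where
  "ev j k = (if j = 1 then (if k = 1 \<or> k = 3 then 1 else -1)
     else if j = 2 then (if k = 2 \<or> k = 3 then 1 else -1)
     else (if k = 1 \<or> k = 2 then 1 else -1))"

lemma kron_entry: "kron A B $ (a,b) $ (c,d) = A $ a $ c * B $ b $ d"
  by (simp add: kron_def)

lemma s2: "1 / sqrt 2 * (1 / sqrt 2) = (1/2::real)" "sqrt 2 * sqrt 2 = (2::real)"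
  by (simp_all add: divide_simps)

lemma kb1: "kron (pauli 1) (pauli 1) $ (a,b) $ (c,d) = (\<Sum>k\<in>UNIV. complex_of_real (ev 1 k * bell k (a,b) * bell k (c,d)))"
  unfolding kron_entry sum_4 ev_def bell_def pauli_def sigma_x_def
  using two_cases[of a] two_cases[of b] two_cases[of c] two_cases[of d]
  by (elim disjE) (simp_all add: s2 divide_simps)
lemma kb2: "kron (pauli 2) (pauli 2) $ (a,b) $ (c,d) = (\<Sum>k\<in>UNIV. complex_of_real (ev 2 k * bell k (a,b) * bell k (c,d)))"
  unfolding kron_entry sum_4 ev_def bell_def pauli_def sigma_y_def
  using two_cases[of a] two_cases[of b] two_cases[of c] two_cases[of d]
  by (elim disjE) (simp_all add: s2 divide_simps)
lemma kb3: "kron (pauli 3) (pauli 3) $ (a,b) $ (c,d) = (\<Sum>k\<in>UNIV. complex_of_real (ev 3 k * bell k (a,b) * bell k (c,d)))"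
  unfolding kron_entry sum_4 ev_def bell_def pauli_def sigma_z_def
  using two_cases[of a] two_cases[of b] two_cases[of c] two_cases[of d]
  by (elim disjE) (simp_all add: s2 divide_simps)
lemma kron_bell: "kron (pauli j) (pauli j) $ r $ c = (\<Sum>k\<in>UNIV. complex_of_real (ev j k * bell k r * bell k c))"
  using exhaust_3[of j] kb1 kb2 kb3 by (cases r; cases c) auto

lemma UNIV_22: "(UNIV :: (2\<times>2) set) = {(0,0),(0,1),(1,0),(1,1)}"
  using two_cases by auto
lemma sum_22: "sum f (UNIV :: (2\<times>2) set) = f (0,0) + f (0,1) + f (1,0) + f (1,1)"
  unfolding UNIV_22 by (simp add: ac_simps)

lemma bell_orth: "(\<Sum>r\<in>UNIV. bell k r * bell l r) = (if k = l then 1 else 0)"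
  unfolding sum_22 bell_def
  using exhaust_4[of k] exhaust_4[of l]
  by (elim disjE) (simp_all add: s2)

lemma bell_compl0: "(\<Sum>k\<in>UNIV. bell k (a,b) * bell k (c,d)) = (if (a,b) = (c,d) then 1 else 0)"
  unfolding sum_4 bell_def
  using two_cases[of a] two_cases[of b] two_cases[of c] two_cases[of d]
  by (elim disjE) (simp_all add: s2)
lemma bell_compl: "(\<Sum>k\<in>UNIV. bell k r * bell k c) = (if r = c then 1 else 0)"
  using bell_compl0 by (cases r; cases c) auto

definition mu :: "real^3 \<Rightarrow> 4 \<Rightarrow> complex" where
  "mu lam k = - \<i> * complex_of_real (\<Sum>j\<in>UNIV. lam $ j * ev j k)"

definition bb :: "4 \<Rightarrow> 2\<times>2 \<Rightarrow> 2\<times>2 \<Rightarrow> complex" where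
  "bb k r c = complex_of_real (bell k r * bell k c)"

definition gen :: "real^3 \<Rightarrow> qop" where
  "gen lam = (\<chi> r c. - \<i> * (\<Sum>j\<in>UNIV. complex_of_real (lam $ j) * kron (pauli j) (pauli j) $ r $ c))"

lemma U_gen: "U lam = mexp (gen lam)"
  unfolding U_def gen_def ..

lemma gen_bell: "gen lam $ r $ c = (\<Sum>k\<in>UNIV. mu lam k * bb k r c)"
proof -
  have "(\<Sum>j\<in>UNIV. complex_of_real (lam $ j) * (\<Sum>k\<in>UNIV. complex_of_real (ev j k * bell k r * bell k c)))
      = (\<Sum>k\<in>UNIV. \<Sum>j\<in>UNIV. complex_of_real (lam $ j) * complex_of_real (ev j k * bell k r * bell k c))"
    by (simp only: sum_distrib_left) (rule sum.swap)
  also have "\<dots> = (\<Sum>k\<in>UNIV. complex_of_real (\<Sum>j\<in>UNIV. lam $ j * ev j k) * bb k r c)"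
    by (simp add: bb_def of_real_sum sum_distrib_right mult.assoc)
  finally have eq: "(\<Sum>j\<in>UNIV. complex_of_real (lam $ j) * (\<Sum>k\<in>UNIV. complex_of_real (ev j k * bell k r * bell k c)))
     = (\<Sum>k\<in>UNIV. complex_of_real (\<Sum>j\<in>UNIV. lam $ j * ev j k) * bb k r c)" .
  have "gen lam $ r $ c = - \<i> * (\<Sum>j\<in>UNIV. complex_of_real (lam $ j) * (\<Sum>k\<in>UNIV. complex_of_real (ev j k * bell k r * bell k c)))"
    unfolding gen_def kron_bell by simp
  also have "\<dots> = - \<i> * (\<Sum>k\<in>UNIV. complex_of_real (\<Sum>j\<in>UNIV. lam $ j * ev j k) * bb k r c)"
    unfolding eq ..
  also have "\<dots> = (\<Sum>k\<in>UNIV. mu lam k * bb k r c)"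
    unfolding mu_def sum_distrib_left by (simp only: mult.assoc)
  finally show ?thesis .
qed

lemma bell_mult:
  "(\<Sum>s\<in>UNIV. (\<Sum>k\<in>UNIV. f k * bb k r s) * (\<Sum>l\<in>UNIV. g l * bb l s c))
   = (\<Sum>k\<in>UNIV. f k * g k * bb k r c)"
proof -
  have "(\<Sum>s\<in>UNIV. (\<Sum>k\<in>UNIV. f k * bb k r s) * (\<Sum>l\<in>UNIV. g l * bb l s c))
      = (\<Sum>s\<in>UNIV. \<Sum>k\<in>UNIV. \<Sum>l\<in>UNIV. f k * g l * complex_of_real (bell k r * bell l c) *
            complex_of_real (bell k s * bell l s))"
    by (simp add: bb_def sum_product algebra_simps)
  also have "\<dots> = (\<Sum>k\<in>UNIV. \<Sum>l\<in>UNIV. \<Sum>s\<in>UNIV. f k * g l * complex_of_real (bell k r * bell l c) *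
            complex_of_real (bell k s * bell l s))"
    by (subst sum.swap) (rule sum.cong[OF refl], rule sum.swap)
  also have "\<dots> = (\<Sum>k\<in>UNIV. \<Sum>l\<in>UNIV. f k * g l * complex_of_real (bell k r * bell l c) *
            complex_of_real (\<Sum>s\<in>UNIV. bell k s * bell l s))"
    by (simp only: of_real_sum sum_distrib_left)
  also have "\<dots> = (\<Sum>k\<in>UNIV. f k * g k * bb k r c)"
    unfolding bell_orth bb_def by (simp add: if_distrib cong: if_cong)
  finally show ?thesis .
qed

lemma mpow_gen: "mpow (gen lam) n = (\<chi> r c. \<Sum>k\<in>UNIV. mu lam k ^ n * bb k r c)"
proof (induction n)
  case 0
  have "(\<Sum>k\<in>UNIV. bb k r c) = (if r = c then 1 else 0)" for r c
    unfolding bb_def of_real_sum[symmetric] bell_compl by simp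
  then show ?case
    by (simp add: vec_eq_iff mat_def)
next
  case (Suc n)
  show ?case
    by (simp add: Suc vec_eq_iff matrix_matrix_mult_def gen_bell bell_mult)
qed

lemma vec_sums: "(\<And>i. (\<lambda>n. f n $ i) sums (l $ i)) \<Longrightarrow> f sums l"
  unfolding sums_def by (rule vec_tendstoI) simp

definition Ex :: "real^3 \<Rightarrow> qop" where
  "Ex lam = (\<chi> r c. \<Sum>k\<in>UNIV. exp (mu lam k) * bb k r c)"

lemma U_Ex: "U lam = Ex lam"
proof -
  have "(\<lambda>n. (1 / fact n) *\<^sub>R mpow (gen lam) n) sums Ex lam"
  proof (rule vec_sums)
    fix r
    show "(\<lambda>n. ((1 / fact n) *\<^sub>R mpow (gen lam) n) $ r) sums Ex lam $ r"
    proof (rule vec_sums)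
      fix c
      have S: "(\<lambda>n. \<Sum>k\<in>UNIV. (mu lam k ^ n /\<^sub>R fact n) * bb k r c)
          sums (\<Sum>k\<in>UNIV. exp (mu lam k) * bb k r c)"
        by (intro sums_sum sums_mult2 exp_converges)
      have E: "((1 / fact n) *\<^sub>R mpow (gen lam) n) $ r $ c = (\<Sum>k\<in>UNIV. (mu lam k ^ n /\<^sub>R fact n) * bb k r c)" for n
        by (simp only: vector_scaleR_component mpow_gen vec_lambda_beta) (simp add: scaleR_sum_right scaleR_conv_of_real divide_inverse mult_ac sum_distrib_left)
      show "(\<lambda>n. ((1 / fact n) *\<^sub>R mpow (gen lam) n) $ r $ c) sums Ex lam $ r $ c"
        unfolding E Ex_def vec_lambda_beta using S .
    qed
  qed
  then show ?thesis unfolding U_gen mexp_def by (simp add: sums_iff)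
qed

definition BV :: "4 \<Rightarrow> qstate" where
  "BV k = (\<chi> r. complex_of_real (bell k r))"

definition zc :: "qstate \<Rightarrow> 4 \<Rightarrow> complex" where
  "zc v k = (\<Sum>c\<in>UNIV. complex_of_real (bell k c) * v $ c)"

lemma Ex_mult: "Ex lam *v v = (\<Sum>k\<in>UNIV. (exp (mu lam k) * zc v k) *s BV k)"
proof -
  have "(\<Sum>c\<in>UNIV. (\<Sum>k\<in>UNIV. exp (mu lam k) * bb k r c) * v $ c)
      = (\<Sum>k\<in>UNIV. exp (mu lam k) * zc v k * complex_of_real (bell k r))" for r
  proof -
    have "(\<Sum>c\<in>UNIV. (\<Sum>k\<in>UNIV. exp (mu lam k) * bb k r c) * v $ c)
       = (\<Sum>c\<in>UNIV. \<Sum>k\<in>UNIV. exp (mu lam k) * complex_of_real (bell k r) * (complex_of_real (bell k c) * v $ c))"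
      by (simp add: bb_def sum_distrib_right sum_distrib_left mult_ac)
    also have "\<dots> = (\<Sum>k\<in>UNIV. \<Sum>c\<in>UNIV. exp (mu lam k) * complex_of_real (bell k r) * (complex_of_real (bell k c) * v $ c))"
      by (rule sum.swap)
    also have "\<dots> = (\<Sum>k\<in>UNIV. exp (mu lam k) * zc v k * complex_of_real (bell k r))"
      by (simp add: zc_def sum_distrib_left mult_ac)
    finally show ?thesis .
  qed
  then show ?thesis
    by (simp add: vec_eq_iff matrix_vector_mult_def Ex_def BV_def)
qed

lemma vec_compl: "v = (\<Sum>k\<in>UNIV. zc v k *s BV k)"
proof -
  have "(\<Sum>k\<in>UNIV. zc v k * complex_of_real (bell k r)) = v $ r" for r
  proof -
    have "(\<Sum>k\<in>UNIV. zc v k * complex_of_real (bell k r))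
        = (\<Sum>k\<in>UNIV. \<Sum>c\<in>UNIV. v $ c * complex_of_real (bell k c * bell k r))"
      by (simp add: zc_def sum_distrib_right sum_distrib_left mult_ac)
    also have "\<dots> = (\<Sum>c\<in>UNIV. \<Sum>k\<in>UNIV. v $ c * complex_of_real (bell k c * bell k r))"
      by (rule sum.swap)
    also have "\<dots> = (\<Sum>c\<in>UNIV. v $ c * complex_of_real (\<Sum>k\<in>UNIV. bell k c * bell k r))"
      by (simp only: of_real_sum sum_distrib_left)
    also have "\<dots> = v $ r"
      unfolding bell_compl by (simp add: if_distrib cong: if_cong)
    finally show ?thesis .
  qed
  then show ?thesis by (simp add: vec_eq_iff BV_def)
qed

lemma braket_BV: "braket (\<Sum>k\<in>UNIV. a k *s BV k) (\<Sum>k\<in>UNIV. b k *s BV k) = (\<Sum>k\<in>UNIV. cnj (a k) * b k)"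
proof -
  have "braket (\<Sum>k\<in>UNIV. a k *s BV k) (\<Sum>k\<in>UNIV. b k *s BV k)
      = (\<Sum>r\<in>UNIV. (\<Sum>k\<in>UNIV. cnj (a k) * complex_of_real (bell k r)) * (\<Sum>l\<in>UNIV. b l * complex_of_real (bell l r)))"
    by (simp add: braket_def BV_def cnj_sum)
  also have "\<dots> = (\<Sum>r\<in>UNIV. \<Sum>k\<in>UNIV. \<Sum>l\<in>UNIV. cnj (a k) * b l * complex_of_real (bell k r * bell l r))"
    by (simp only: sum_distrib_right, simp only: sum_distrib_left, simp add: mult_ac)
  also have "\<dots> = (\<Sum>k\<in>UNIV. \<Sum>l\<in>UNIV. \<Sum>r\<in>UNIV. cnj (a k) * b l * complex_of_real (bell k r * bell l r))"
    by (subst sum.swap) (rule sum.cong[OF refl], rule sum.swap)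
  also have "\<dots> = (\<Sum>k\<in>UNIV. \<Sum>l\<in>UNIV. cnj (a k) * b l * complex_of_real (\<Sum>r\<in>UNIV. bell k r * bell l r))"
    by (simp only: of_real_sum sum_distrib_left)
  also have "\<dots> = (\<Sum>k\<in>UNIV. cnj (a k) * b k)"
    unfolding bell_orth by (simp add: if_distrib cong: if_cong)
  finally show ?thesis .
qed

lemma psi_form: "psi psi0 lam = (\<Sum>k\<in>UNIV. (exp (mu lam k) * zc psi0 k) *s BV k)"
  unfolding psi_def U_Ex Ex_mult ..

lemma mu_shift: "mu (lam + t *\<^sub>R axis j 1) k = mu lam k + (- \<i> * complex_of_real (ev j k)) * complex_of_real t"
proof -
  have "(\<Sum>i\<in>UNIV. (lam + t *\<^sub>R axis j 1) $ i * ev i k) = (\<Sum>i\<in>UNIV. lam $ i * ev i k) + t * ev j k"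
  proof -
    have e: "(lam + t *\<^sub>R axis j 1) $ i * ev i k = lam $ i * ev i k + t * (if i = j then ev i k else 0)" for i
      by (simp add: axis_def algebra_simps)
    show ?thesis unfolding e sum.distrib sum_distrib_left[symmetric] by simp
  qed
  then show ?thesis by (simp add: mu_def algebra_simps)
qed

lemma bl_smult: "bounded_linear (\<lambda>c::complex. c *s (B :: complex^'n))"
  apply (subst linear_conv_bounded_linear[symmetric])
  apply (rule linearI)
   apply (simp_all add: vec_eq_iff algebra_simps)
  done

lemma hvd_smult: "(g has_vector_derivative g') F \<Longrightarrow> ((\<lambda>t. g t *s (B :: complex^'n)) has_vector_derivative (g' *s B)) F"
  by (rule bounded_linear.has_vector_derivative[OF bl_smult])

lemma hvd_exp: "((\<lambda>t::real. exp (m + a * complex_of_real t) * z) has_vector_derivative (exp m * a * z)) (at 0)"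
proof -
  have "((\<lambda>w. exp (m + a * w) * z) has_field_derivative (exp (m + a * 0) * a * z)) (at (complex_of_real 0))"
    by (auto intro!: derivative_eq_intros)
  then show ?thesis using has_vector_derivative_real_field by fastforce
qed

lemma dpsi_form: "dpsi psi0 j lam = (\<Sum>k\<in>UNIV. (exp (mu lam k) * (- \<i> * complex_of_real (ev j k)) * zc psi0 k) *s BV k)"
proof -
  have eq: "(\<lambda>t. psi psi0 (lam + t *\<^sub>R axis j 1)) =
     (\<lambda>t. \<Sum>k\<in>UNIV. (exp (mu lam k + (- \<i> * complex_of_real (ev j k)) * complex_of_real t) * zc psi0 k) *s BV k)"
    unfolding psi_form mu_shift ..
  have "((\<lambda>t. \<Sum>k\<in>UNIV. (exp (mu lam k + (- \<i> * complex_of_real (ev j k)) * complex_of_real t) * zc psi0 k) *s BV k)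
     has_vector_derivative (\<Sum>k\<in>UNIV. (exp (mu lam k) * (- \<i> * complex_of_real (ev j k)) * zc psi0 k) *s BV k)) (at 0)"
    by (intro has_vector_derivative_sum hvd_smult hvd_exp)
  then show ?thesis unfolding dpsi_def eq by (rule vector_derivative_at)
qed

lemma cnjE: "cnj (exp (mu lam k)) * exp (mu lam k) = 1"
proof -
  have "cnj (exp (mu lam k)) * exp (mu lam k) = exp (cnj (mu lam k) + mu lam k)"
    by (simp add: exp_cnj exp_add)
  also have "cnj (mu lam k) + mu lam k = 0" by (simp add: mu_def)
  finally show ?thesis by simp
qed

definition qq :: "qstate \<Rightarrow> 4 \<Rightarrow> real" where
  "qq v k = (cmod (zc v k))\<^sup>2"

lemma cnjz: "cnj (zc v k) * zc v k = complex_of_real (qq v k)"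
  unfolding qq_def complex_norm_square by simp

definition Qm :: "(4 \<Rightarrow> real) \<Rightarrow> real^3^3" where
  "Qm q = (\<chi> j l. 4 * ((\<Sum>k\<in>UNIV. ev j k * ev l k * q k) - (\<Sum>k\<in>UNIV. ev j k * q k) * (\<Sum>k\<in>UNIV. ev l k * q k)))"

lemma QFI_form: "QFI psi0 lam = Qm (qq psi0)"
proof -
  let ?E = "\<lambda>k. exp (mu lam k)" and ?z = "zc psi0 k"
  have t1: "cnj (exp (mu lam k) * (- \<i> * complex_of_real (ev j k)) * zc psi0 k) *
            (exp (mu lam k) * (- \<i> * complex_of_real (ev l k)) * zc psi0 k)
         = complex_of_real (ev j k * ev l k * qq psi0 k)" for j l k
  proof -
    have "cnj (exp (mu lam k) * (- \<i> * complex_of_real (ev j k)) * zc psi0 k) *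
            (exp (mu lam k) * (- \<i> * complex_of_real (ev l k)) * zc psi0 k)
        = (cnj (exp (mu lam k)) * exp (mu lam k)) * (cnj (zc psi0 k) * zc psi0 k) * complex_of_real (ev j k * ev l k)"
      by (simp add: algebra_simps)
    then show ?thesis unfolding cnjE cnjz by simp
  qed
  have t2: "cnj (exp (mu lam k) * (- \<i> * complex_of_real (ev j k)) * zc psi0 k) *
            (exp (mu lam k) * zc psi0 k)
         = \<i> * complex_of_real (ev j k * qq psi0 k)" for j k
  proof -
    have "cnj (exp (mu lam k) * (- \<i> * complex_of_real (ev j k)) * zc psi0 k) *
            (exp (mu lam k) * zc psi0 k)
        = (cnj (exp (mu lam k)) * exp (mu lam k)) * (cnj (zc psi0 k) * zc psi0 k) * (\<i> * complex_of_real (ev j k))"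
      by (simp add: algebra_simps)
    then show ?thesis unfolding cnjE cnjz by simp
  qed
  have t3: "cnj (exp (mu lam k) * zc psi0 k) *
            (exp (mu lam k) * (- \<i> * complex_of_real (ev l k)) * zc psi0 k)
         = - \<i> * complex_of_real (ev l k * qq psi0 k)" for l k
  proof -
    have "cnj (exp (mu lam k) * zc psi0 k) *
            (exp (mu lam k) * (- \<i> * complex_of_real (ev l k)) * zc psi0 k)
        = (cnj (exp (mu lam k)) * exp (mu lam k)) * (cnj (zc psi0 k) * zc psi0 k) * (- \<i> * complex_of_real (ev l k))"
      by (simp add: algebra_simps)
    then show ?thesis unfolding cnjE cnjz by simp
  qed
  have "QFI psi0 lam $ j $ l = Qm (qq psi0) $ j $ l" for j l
  proof -
    have "QFI psi0 lam $ j $ l = 4 * Re (complex_of_real (\<Sum>k\<in>UNIV. ev j k * ev l k * qq psi0 k)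
        - (\<i> * complex_of_real (\<Sum>k\<in>UNIV. ev j k * qq psi0 k)) * (- \<i> * complex_of_real (\<Sum>k\<in>UNIV. ev l k * qq psi0 k)))"
      unfolding QFI_def vec_lambda_beta dpsi_form psi_form braket_BV t1 t2 t3
      by (simp add: of_real_sum sum_distrib_left)
    also have "\<dots> = Qm (qq psi0) $ j $ l"
      by (simp add: Qm_def)
    finally show ?thesis .
  qed
  then show ?thesis by (simp add: vec_eq_iff)
qed

lemma norm_qq: "normalized v \<Longrightarrow> (\<Sum>k\<in>UNIV. qq v k) = 1"
proof -
  assume "normalized v"
  then have "braket v v = 1" by (simp add: normalized_def)
  then have "braket (\<Sum>k\<in>UNIV. zc v k *s BV k) (\<Sum>k\<in>UNIV. zc v k *s BV k) = 1"
    using vec_compl[of v] by simp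
  then have "complex_of_real (\<Sum>k\<in>UNIV. qq v k) = 1"
    unfolding braket_BV cnjz of_real_sum .
  then show ?thesis by (metis of_real_eq_1_iff)
qed

definition adj3 :: "real^3^3 \<Rightarrow> real^3^3" where
  "adj3 A = (\<chi> i j. A$(j+1)$(i+1) * A$(j+2)$(i+2) - A$(j+1)$(i+2) * A$(j+2)$(i+1))"

lemma num3[simp]: "(1::3) + 1 = 2" "(2::3) + 1 = 3" "(3::3) + 1 = 1" "(1::3) + 2 = 3" "(2::3) + 2 = 1" "(3::3) + 2 = 2"
  by simp_all

lemma num3b[simp]: "(4::3) = 1" "(5::3) = 2" "(6::3) = 3"
  by simp_all

lemma adj3_r: "A ** adj3 A = (\<chi> i j. if i = j then det A else 0)"
  unfolding vec_eq_iff forall_3 matrix_matrix_mult_def adj3_def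
  by (simp add: sum_3 det_3 algebra_simps)

lemma adj3_l: "adj3 A ** A = (\<chi> i j. if i = j then det A else 0)"
  unfolding vec_eq_iff forall_3 matrix_matrix_mult_def adj3_def
  by (simp add: sum_3 det_3 algebra_simps)

lemma Qm_det: assumes "q 1 + q 2 + q 3 + q 4 = 1"
  shows "det (Qm q) = 16384 * (q 1 * q 2 * q 3 * q 4)"
proof -
  have h: "q 4 = 1 - q 1 - q 2 - q 3" using assms by simp
  show ?thesis unfolding det_3 Qm_def vec_lambda_beta sum_4 ev_def h
    by simp algebra
qed

lemma Qm_adj: assumes "q 1 + q 2 + q 3 + q 4 = 1"
  shows "adj3 (Qm q) $ i $ i = 256 * (q 1 * q 2 * q 3 + q 1 * q 2 * q 4 + q 1 * q 3 * q 4 + q 2 * q 3 * q 4)"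
proof -
  have h: "q 4 = 1 - q 1 - q 2 - q 3" using assms by simp
  show ?thesis using exhaust_3[of i] unfolding adj3_def Qm_def vec_lambda_beta sum_4 ev_def h
    by (elim disjE) (simp add: algebra_simps)+
qed



lemma R1: fixes a b c d :: real
  assumes "a \<ge> 0" "b \<ge> 0" "c \<ge> 0" "d \<ge> 0" "a + b + c + d = 1"
  shows "a * b * c * d \<le> 1/256" and "a * b * c * d = 1/256 \<Longrightarrow> a = 1/4 \<and> b = 1/4 \<and> c = 1/4 \<and> d = 1/4"
proof -
  define x where "x = a * b"
  define y where "y = c * d"
  define X where "X = ((a + b) / 2)^2"
  define Y where "Y = ((c + d) / 2)^2"
  have "0 \<le> (a - b)^2" by simp
  then have x0: "0 \<le> x" "x \<le> X" unfolding x_def X_def using assms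
    by (auto simp: power2_eq_square field_simps)
  have "0 \<le> (c - d)^2" by simp
  then have y0: "0 \<le> y" "y \<le> Y" unfolding y_def Y_def using assms
    by (auto simp: power2_eq_square field_simps)
  have S: "(a + b) * (c + d) \<le> 1/4"
  proof -
    have "0 \<le> ((a + b) - (c + d))^2" by simp
    moreover have "4*((a+b)*(c+d)) = ((a+b)+(c+d))^2 - ((a+b)-(c+d))^2" by (simp add: power2_eq_square algebra_simps)
    moreover have "(a+b)+(c+d) = 1" using assms(5) by simp
    ultimately have "4*((a+b)*(c+d)) = 1 - ((a+b)-(c+d))^2" "0 \<le> ((a + b) - (c + d))^2" by simp_all
    then show ?thesis by linarith
  qed
  have S0: "0 \<le> (a + b) * (c + d)" using assms by simp
  have XY: "X * Y = ((a + b) * (c + d))^2 / 16" unfolding X_def Y_def by (simp add: power2_eq_square field_simps)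
  have XY2: "X * Y \<le> 1/256"
  proof -
    have "((a + b) * (c + d))^2 \<le> (1/4)^2" using S S0 by (intro power_mono) auto
    then show ?thesis unfolding XY by (simp add: power_divide)
  qed
  have xy: "x * y \<le> X * Y" using x0 y0 by (intro mult_mono) auto
  have e: "a * b * c * d = x * y" unfolding x_def y_def by simp
  show "a * b * c * d \<le> 1/256" using e xy XY2 by simp
  assume eq: "a * b * c * d = 1/256"
  have xyp: "x * y = 1/256" using e eq by simp
  have ypos: "y > 0" using xyp x0 y0 by (metis less_eq_real_def mult_zero_right zero_neq_numeral divide_eq_0_iff one_neq_zero)
  have xpos: "x > 0" using xyp x0 y0 by (metis less_eq_real_def mult_zero_left zero_neq_numeral divide_eq_0_iff one_neq_zero)
  have m1: "x * y \<le> X * y" using x0 y0 by (intro mult_right_mono) auto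
  have m2: "X * y \<le> X * Y" using x0 y0 by (intro mult_left_mono) auto
  have "x * y = X * y" using m1 m2 xyp XY2 by linarith
  then have xX: "x = X" using ypos by simp
  have "X * y = X * Y" using m1 m2 xyp XY2 by linarith
  then have yY: "y = Y" using xpos x0 by simp
  have "((a + b) * (c + d))^2 = (1/4)^2" using XY xyp xX yY by (simp add: power_divide)
  then have "(a + b) * (c + d) = 1/4" using S0 by (simp add: power2_eq_iff)
  moreover have "4*((a+b)*(c+d)) = ((a+b)+(c+d))^2 - ((a+b)-(c+d))^2" by (simp add: power2_eq_square algebra_simps)
  moreover have "(a+b)+(c+d) = 1" using assms(5) by simp
  ultimately have "4*((a+b)*(c+d)) = 1 - ((a+b)-(c+d))^2" "(a + b) * (c + d) = 1/4" by simp_all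
  then have "((a + b) - (c + d))^2 = 0" by linarith
  then have ab: "a + b = 1/2" and cd: "c + d = 1/2" using assms(5) by auto
  have abv: "a*b = 1/16" using xX ab unfolding x_def X_def by (simp add: power_divide)
  have cdv: "c*d = 1/16" using yY cd unfolding y_def Y_def by (simp add: power_divide)
  have "(a - b)^2 = (a+b)^2 - 4*(a*b)" "(c - d)^2 = (c+d)^2 - 4*(c*d)" by (simp_all add: power2_eq_square algebra_simps)
  then have "(a - b)^2 = 0" "(c - d)^2 = 0" using ab cd abv cdv by (simp_all add: power_divide)
  then show "a = 1/4 \<and> b = 1/4 \<and> c = 1/4 \<and> d = 1/4" using ab cd by auto
qed

lemma R3: fixes a b c d :: real
  assumes "a > 0" "b > 0" "c > 0" "d > 0" "a + b + c + d = 1"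
  shows "16 * (a * b * c * d) \<le> a * b * c + a * b * d + a * c * d + b * c * d"
    and "16 * (a * b * c * d) = a * b * c + a * b * d + a * c * d + b * c * d \<Longrightarrow> a = 1/4 \<and> b = 1/4 \<and> c = 1/4 \<and> d = 1/4"
proof -
  have h: "d = 1 - a - b - c" using assms by simp
  have id: "a * b * c + a * b * d + a * c * d + b * c * d - 16 * (a * b * c * d)
     = (4*a - 1)^2 * (b * c * d) + (4*b - 1)^2 * (a * c * d) + (4*c - 1)^2 * (a * b * d) + (4*d - 1)^2 * (a * b * c)"
    unfolding h by (simp add: power2_eq_square algebra_simps)
  have t1: "0 \<le> (4*a - 1)^2 * (b * c * d)" using assms by simp
  have t2: "0 \<le> (4*b - 1)^2 * (a * c * d)" using assms by simp
  have t3: "0 \<le> (4*c - 1)^2 * (a * b * d)" using assms by simp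
  have t4: "0 \<le> (4*d - 1)^2 * (a * b * c)" using assms by simp
  show "16 * (a * b * c * d) \<le> a * b * c + a * b * d + a * c * d + b * c * d"
    using id t1 t2 t3 t4 by linarith
  assume "16 * (a * b * c * d) = a * b * c + a * b * d + a * c * d + b * c * d"
  then have z: "(4*a - 1)^2 * (b * c * d) = 0" "(4*b - 1)^2 * (a * c * d) = 0"
     "(4*c - 1)^2 * (a * b * d) = 0" "(4*d - 1)^2 * (a * b * c) = 0"
    using id t1 t2 t3 t4 by linarith+
  then show "a = 1/4 \<and> b = 1/4 \<and> c = 1/4 \<and> d = 1/4" using assms by auto
qed



lemma inv3: fixes A :: "real^3^3" assumes d: "det A \<noteq> 0"
  shows "trace (matrix_inv A) = (adj3 A $ 1 $ 1 + adj3 A $ 2 $ 2 + adj3 A $ 3 $ 3) / det A"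
proof -
  define B where "B = (\<chi> i j. adj3 A $ i $ j / det A)"
  have r0: "(\<Sum>k\<in>UNIV. A $ i $ k * adj3 A $ k $ j) = (if i = j then det A else 0)" for i j
    using arg_cong[OF adj3_r, of "\<lambda>M. M $ i $ j"] by (simp add: matrix_matrix_mult_def)
  have l0: "(\<Sum>k\<in>UNIV. adj3 A $ i $ k * A $ k $ j) = (if i = j then det A else 0)" for i j
    using arg_cong[OF adj3_l, of "\<lambda>M. M $ i $ j"] by (simp add: matrix_matrix_mult_def)
  have r: "A ** B = mat 1"
  proof -
    have "(\<Sum>k\<in>UNIV. A $ i $ k * (adj3 A $ k $ j / det A)) = (if i = j then 1 else 0)" for i j
      using r0[of i j] d by (simp add: sum_divide_distrib[symmetric] times_divide_eq_right)
    then show ?thesis by (simp add: vec_eq_iff matrix_matrix_mult_def B_def mat_def)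
  qed
  have l: "B ** A = mat 1"
  proof -
    have "(\<Sum>k\<in>UNIV. (adj3 A $ i $ k / det A) * A $ k $ j) = (if i = j then 1 else 0)" for i j
      using l0[of i j] d by (simp add: sum_divide_distrib[symmetric] times_divide_eq_left)
    then show ?thesis by (simp add: vec_eq_iff matrix_matrix_mult_def B_def mat_def)
  qed
  have "matrix_inv A = B"
    unfolding matrix_inv_def
  proof (rule some_equality)
    show "A ** B = mat 1 \<and> B ** A = mat 1" using r l by simp
  next
    fix A' assume "A ** A' = mat 1 \<and> A' ** A = mat 1"
    then have "A' = (A' ** A) ** B" using r by (metis matrix_mul_assoc matrix_mul_rid)
    then show "A' = B" using \<open>A ** A' = mat 1 \<and> A' ** A = mat 1\<close> by simp
  qed
  then show ?thesis by (simp add: trace_def sum_3 B_def add_divide_distrib)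
qed

lemma e34: "(3/4::ereal) = ereal (3/4)" "(1/64::ereal) = ereal (1/64)"
  by (simp_all add: one_ereal_def)



definition unif :: "qstate \<Rightarrow> bool" where
  "unif v \<longleftrightarrow> qq v 1 = 1/4 \<and> qq v 2 = 1/4 \<and> qq v 3 = 1/4 \<and> qq v 4 = 1/4"

lemma main_q:
  assumes "normalized psi0"
  shows "precision psi0 lam \<ge> 3/4 \<and> sloppiness psi0 lam \<ge> 1/64 \<and> det (QFI psi0 lam) \<le> 64"
    and "precision psi0 lam = 3/4 \<longleftrightarrow> unif psi0"
    and "sloppiness psi0 lam = 1/64 \<longleftrightarrow> unif psi0"
proof -
  define a where "a = qq psi0 1"
  define b where "b = qq psi0 2"
  define c where "c = qq psi0 3"
  define d where "d = qq psi0 4"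
  have pos: "a \<ge> 0" "b \<ge> 0" "c \<ge> 0" "d \<ge> 0" unfolding a_def b_def c_def d_def qq_def by simp_all
  have s1: "qq psi0 1 + qq psi0 2 + qq psi0 3 + qq psi0 4 = 1" using norm_qq[OF assms] by (simp add: sum_4)
  then have s: "a + b + c + d = 1" unfolding a_def b_def c_def d_def .
  have det: "det (QFI psi0 lam) = 16384 * (a * b * c * d)"
    unfolding QFI_form Qm_det[OF s1] a_def b_def c_def d_def ..
  have adj: "adj3 (QFI psi0 lam) $ i $ i = 256 * (a * b * c + a * b * d + a * c * d + b * c * d)" for i
    unfolding QFI_form Qm_adj[OF s1] a_def b_def c_def d_def ..
  have unif_iff: "unif psi0 \<longleftrightarrow> a = 1/4 \<and> b = 1/4 \<and> c = 1/4 \<and> d = 1/4"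
    unfolding unif_def a_def b_def c_def d_def ..
  have tr: "det (QFI psi0 lam) \<noteq> 0 \<Longrightarrow> trace (matrix_inv (QFI psi0 lam)) = 3 * (256 * (a * b * c + a * b * d + a * c * d + b * c * d)) / (16384 * (a * b * c * d))"
    using inv3[of "QFI psi0 lam"] unfolding adj det by simp
  have inv: "invertible (QFI psi0 lam) \<longleftrightarrow> a * b * c * d \<noteq> 0"
    unfolding invertible_det_nz det by simp
  have R1a: "a * b * c * d \<le> 1/256" using R1(1)[OF pos s] .
  have allpos: "a * b * c * d \<noteq> 0 \<Longrightarrow> a > 0 \<and> b > 0 \<and> c > 0 \<and> d > 0"
    using pos by (auto simp: less_le)
  show "precision psi0 lam \<ge> 3/4 \<and> sloppiness psi0 lam \<ge> 1/64 \<and> det (QFI psi0 lam) \<le> 64"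
  proof (intro conjI)
    show "precision psi0 lam \<ge> 3/4"
    proof (cases "a * b * c * d = 0")
      case True then show ?thesis by (simp add: precision_def inv)
    next
      case False
      then have p: "a > 0" "b > 0" "c > 0" "d > 0" using allpos by auto
      have "16 * (a * b * c * d) \<le> a * b * c + a * b * d + a * c * d + b * c * d" using R3(1)[OF p s] .
      moreover have "a * b * c * d > 0" using p by simp
      ultimately have "3/4 \<le> 3 * (256 * (a * b * c + a * b * d + a * c * d + b * c * d)) / (16384 * (a * b * c * d))"
        by (simp add: field_simps)
      then show ?thesis using False tr det by (simp add: precision_def inv e34)
    qed
    show "sloppiness psi0 lam \<ge> 1/64"
    proof (cases "a * b * c * d = 0")
      case True then show ?thesis by (simp add: sloppiness_def det)
    next
      case False
      then have "a * b * c * d > 0" using allpos by simp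
      then have "1/64 \<le> 1 / (16384 * (a * b * c * d))" using R1a by (simp add: field_simps)
      then show ?thesis using False unfolding e34 by (simp add: sloppiness_def det)
    qed
    show "det (QFI psi0 lam) \<le> 64" using R1a det by simp
  qed
  show "precision psi0 lam = 3/4 \<longleftrightarrow> unif psi0"
  proof
    assume h: "precision psi0 lam = 3/4"
    have nz: "a * b * c * d \<noteq> 0"
      using h by (auto simp: precision_def inv split: if_splits)
    then have p: "a > 0" "b > 0" "c > 0" "d > 0" using allpos by auto
    have "3 * (256 * (a * b * c + a * b * d + a * c * d + b * c * d)) / (16384 * (a * b * c * d)) = 3/4"
      using h nz tr det by (simp add: precision_def inv e34)
    then have "16 * (a * b * c * d) = a * b * c + a * b * d + a * c * d + b * c * d"
      using nz by (simp add: field_simps)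
    then show "unif psi0" using R3(2)[OF p s] unif_iff by simp
  next
    assume "unif psi0"
    then have u: "a = 1/4" "b = 1/4" "c = 1/4" "d = 1/4" using unif_iff by auto
    have d64: "det (QFI psi0 lam) = 64" unfolding det u by simp
    have "trace (matrix_inv (QFI psi0 lam)) = 3/4" using tr d64 unfolding u by simp
    then show "precision psi0 lam = 3/4" unfolding precision_def e34 using d64 by (simp add: invertible_det_nz)
  qed
  show "sloppiness psi0 lam = 1/64 \<longleftrightarrow> unif psi0"
  proof
    assume h: "sloppiness psi0 lam = 1/64"
    have nz: "a * b * c * d \<noteq> 0"
      using h[unfolded e34] by (auto simp: sloppiness_def det split: if_splits)
    have "1 / (16384 * (a * b * c * d)) = 1/64" using h[unfolded e34] nz by (simp add: sloppiness_def det)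
    then have "a * b * c * d = 1/256" using nz by (simp add: field_simps)
    then show "unif psi0" using R1(2)[OF pos s] unif_iff by simp
  next
    assume "unif psi0"
    then have u: "a = 1/4" "b = 1/4" "c = 1/4" "d = 1/4" using unif_iff by auto
    have d64: "det (QFI psi0 lam) = 64" unfolding det u by simp
    then show "sloppiness psi0 lam = 1/64" unfolding e34 by (simp add: sloppiness_def)
  qed
qed



lemma zc_vals:
  "zc v 1 = (v $ (0,0) + v $ (1,1)) / complex_of_real (sqrt 2)"
  "zc v 2 = (v $ (0,0) - v $ (1,1)) / complex_of_real (sqrt 2)"
  "zc v 3 = (v $ (0,1) + v $ (1,0)) / complex_of_real (sqrt 2)"
  "zc v 4 = (v $ (0,1) - v $ (1,0)) / complex_of_real (sqrt 2)"
  by (simp_all add: zc_def sum_22 bell_def field_simps)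

lemma qq_vals:
  "qq v 1 = (cmod (v $ (0,0) + v $ (1,1)))^2 / 2"
  "qq v 2 = (cmod (v $ (0,0) - v $ (1,1)))^2 / 2"
  "qq v 3 = (cmod (v $ (0,1) + v $ (1,0)))^2 / 2"
  "qq v 4 = (cmod (v $ (0,1) - v $ (1,0)))^2 / 2"
  by (simp_all add: qq_def zc_vals norm_divide power_divide)

lemma cmod_pm:
  "(cmod (x + y))^2 = (cmod x)^2 + (cmod y)^2 + 2 * Re (x * cnj y)"
  "(cmod (x - y))^2 = (cmod x)^2 + (cmod y)^2 - 2 * Re (x * cnj y)"
  unfolding cmod_power2 by (simp_all add: power2_eq_square algebra_simps)

lemma pair_iff: "((cmod (x + y))^2 / 2 = 1/4 \<and> (cmod (x - y))^2 / 2 = 1/4) \<longleftrightarrow>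
    ((cmod x)^2 + (cmod y)^2 = 1/2 \<and> Re (x * cnj y) = 0)"
  unfolding cmod_pm by auto

lemma unif_pairs: "unif v \<longleftrightarrow>
   ((cmod (v $ (0,0)))^2 + (cmod (v $ (1,1)))^2 = 1/2 \<and> Re (v $ (0,0) * cnj (v $ (1,1))) = 0) \<and>
   ((cmod (v $ (0,1)))^2 + (cmod (v $ (1,0)))^2 = 1/2 \<and> Re (v $ (0,1) * cnj (v $ (1,0))) = 0)"
  unfolding unif_def qq_vals using pair_iff by blast

lemma unit_cnj: "cmod u = 1 \<Longrightarrow> cnj u * u = 1"
  using complex_norm_square[of u] by (simp add: mult.commute)

lemma pairF:
  assumes u: "cmod u = 1" and w: "cmod w = 1" and s: "s \<in> {1, -1::real}" and a: "0 \<le> a" "a \<le> 1 / sqrt 2"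
  shows "(cmod (u * (complex_of_real a * w)))^2 + (cmod (u * (complex_of_real s * \<i> * complex_of_real (sqrt (1/2 - a\<^sup>2)) * w)))^2 = 1/2
    \<and> Re ((u * (complex_of_real a * w)) * cnj (u * (complex_of_real s * \<i> * complex_of_real (sqrt (1/2 - a\<^sup>2)) * w))) = 0"
proof
  have a2: "a\<^sup>2 \<le> 1/2"
  proof -
    have "a\<^sup>2 \<le> (1 / sqrt 2)\<^sup>2" using a by (intro power_mono) auto
    then show ?thesis by (simp add: power_divide)
  qed
  have sa: "\<bar>s\<bar> = 1" using s by auto
  show "(cmod (u * (complex_of_real a * w)))^2 + (cmod (u * (complex_of_real s * \<i> * complex_of_real (sqrt (1/2 - a\<^sup>2)) * w)))^2 = 1/2"
    using u w sa a2 a by (simp add: norm_mult power_mult_distrib)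
  have "(u * (complex_of_real a * w)) * cnj (u * (complex_of_real s * \<i> * complex_of_real (sqrt (1/2 - a\<^sup>2)) * w))
      = (cnj u * u) * (cnj w * w) * (- \<i> * complex_of_real (a * s * sqrt (1/2 - a\<^sup>2)))"
    by (simp only: complex_cnj_mult complex_cnj_complex_of_real complex_cnj_i of_real_mult) algebra
  also have "\<dots> = - \<i> * complex_of_real (a * s * sqrt (1/2 - a\<^sup>2))"
    using unit_cnj[OF u] unit_cnj[OF w] by simp
  finally have eq: "(u * (complex_of_real a * w)) * cnj (u * (complex_of_real s * \<i> * complex_of_real (sqrt (1/2 - a\<^sup>2)) * w))
     = - \<i> * complex_of_real (a * s * sqrt (1/2 - a\<^sup>2))" .
  show "Re ((u * (complex_of_real a * w)) * cnj (u * (complex_of_real s * \<i> * complex_of_real (sqrt (1/2 - a\<^sup>2)) * w))) = 0"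
    unfolding eq by simp
qed

lemma angle: "cmod w = 1 \<Longrightarrow> \<exists>\<phi>. 0 \<le> \<phi> \<and> \<phi> < 2 * pi \<and> w = cis \<phi>"
proof -
  assume w: "cmod w = 1"
  then have "w \<noteq> 0" by auto
  then have e: "w = cis (Arg w)" using cis_Arg[of w] w by (simp add: sgn_div_norm)
  have b: "- pi < Arg w" "Arg w \<le> pi" using Arg_bounded[of w] by auto
  show ?thesis
  proof (cases "Arg w \<ge> 0")
    case True
    then show ?thesis using e b by (intro exI[of _ "Arg w"]) auto
  next
    case False
    have "cis (Arg w + 2 * pi) = cis (Arg w)" by (simp add: complex_eq_iff)
    then show ?thesis using e b False by (intro exI[of _ "Arg w + 2 * pi"]) auto
  qed
qed



lemma ket_eq: "(v = c *s ket A B C D) \<longleftrightarrow> v $ (0,0) = c * A \<and> v $ (0,1) = c * B \<and> v $ (1,0) = c * C \<and> v $ (1,1) = c * D"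
proof
  assume "v = c *s ket A B C D" then show "v $ (0,0) = c * A \<and> v $ (0,1) = c * B \<and> v $ (1,0) = c * C \<and> v $ (1,1) = c * D"
    by (simp add: ket_def)
next
  assume h: "v $ (0,0) = c * A \<and> v $ (0,1) = c * B \<and> v $ (1,0) = c * C \<and> v $ (1,1) = c * D"
  show "v = c *s ket A B C D"
    unfolding vec_eq_iff
  proof
    fix i :: "2 \<times> 2"
    obtain x y where i: "i = (x, y)" by (cases i)
    show "v $ i = (c *s ket A B C D) $ i"
      using h two_cases[of x] two_cases[of y] unfolding i by (auto simp: ket_def)
  qed
qed

lemma sqrt_half: "sqrt (1/2) = 1 / sqrt 2"
  by (simp add: real_sqrt_divide)

lemma pairB:
  assumes n: "(cmod X)^2 + (cmod Y)^2 = 1/2" and r: "Re (X * cnj Y) = 0"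
  shows "\<exists>\<beta> w s. 0 \<le> \<beta> \<and> \<beta> \<le> 1 / sqrt 2 \<and> cmod w = 1 \<and> s \<in> {1, -1::real} \<and>
     X = complex_of_real \<beta> * w \<and> Y = complex_of_real s * \<i> * complex_of_real (sqrt (1/2 - \<beta>\<^sup>2)) * w"
proof (cases "X = 0")
  case True
  then have y2: "(cmod Y)^2 = 1/2" using n by simp
  then have ny: "cmod Y = sqrt (1/2)" by (metis norm_ge_zero real_sqrt_unique)
  define w where "w = - \<i> * Y * complex_of_real (sqrt 2)"
  have s22: "sqrt (1/2) * sqrt 2 = 1" by (simp add: real_sqrt_mult[symmetric])
  have cw: "cmod w = 1" unfolding w_def by (simp add: norm_mult ny s22)
  have "complex_of_real 1 * \<i> * complex_of_real (sqrt (1/2 - 0\<^sup>2)) * w = complex_of_real (sqrt (1/2) * sqrt 2) * Y"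
    unfolding w_def by (simp add: algebra_simps)
  then have "Y = complex_of_real 1 * \<i> * complex_of_real (sqrt (1/2 - 0\<^sup>2)) * w" unfolding s22 by simp
  then show ?thesis using cw True by (intro exI[of _ 0] exI[of _ w] exI[of _ 1]) auto
next
  case False
  define \<beta> where "\<beta> = cmod X"
  define w where "w = X / complex_of_real \<beta>"
  have bpos: "\<beta> > 0" using False unfolding \<beta>_def by simp
  have cw: "cmod w = 1" unfolding w_def \<beta>_def using False by (simp add: norm_divide)
  have Xw: "X = complex_of_real \<beta> * w" unfolding w_def using bpos by simp
  define Z where "Z = Y * cnj w"
  have ReZ: "Re Z = 0"
  proof -
    have "Z = Y * cnj X / complex_of_real \<beta>" unfolding Z_def w_def by simp
    then have "Re Z = Re (Y * cnj X) / \<beta>" by (simp add: Re_divide_of_real)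
    moreover have "Re (Y * cnj X) = Re (X * cnj Y)" by (simp add: algebra_simps)
    ultimately show ?thesis using r by (simp add: algebra_simps)
  qed
  have Zi: "Z = \<i> * complex_of_real (Im Z)" using ReZ by (simp add: complex_eq_iff)
  have nZ: "cmod Z = cmod Y" unfolding Z_def using cw by (simp add: norm_mult)
  have tY: "\<bar>Im Z\<bar> = cmod Y" using nZ Zi by (metis abs_Im_le_cmod cmod_eq_Im ReZ)
  have Y2: "(cmod Y)^2 = 1/2 - \<beta>\<^sup>2" using n unfolding \<beta>_def by simp
  then have nY: "cmod Y = sqrt (1/2 - \<beta>\<^sup>2)" by (metis norm_ge_zero real_sqrt_unique)
  define s :: real where "s = (if Im Z \<ge> 0 then 1 else -1)"
  have ts: "Im Z = s * sqrt (1/2 - \<beta>\<^sup>2)" using tY nY unfolding s_def by auto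
  have "Y = Z * w" unfolding Z_def using unit_cnj[OF cw] by (simp add: mult.assoc mult.commute[of "cnj w"])
  then have Yw: "Y = complex_of_real s * \<i> * complex_of_real (sqrt (1/2 - \<beta>\<^sup>2)) * w"
    using Zi ts by (simp add: algebra_simps)
  have "\<beta>\<^sup>2 \<le> 1/2" using Y2 by (metis diff_ge_0_iff_ge zero_le_power2)
  then have "\<beta> \<le> sqrt (1/2)" by (rule real_le_rsqrt)
  then have "\<beta> \<le> 1 / sqrt 2" using sqrt_half by simp
  then show ?thesis using bpos cw Xw Yw
    by (intro exI[of _ \<beta>] exI[of _ w] exI[of _ s]) (auto simp: s_def)
qed

lemma opt_unif: "optimal_form v \<longleftrightarrow> unif v"
proof
  assume "optimal_form v"
  then obtain c \<alpha> \<beta> \<phi> s1 s2 where h: "cmod c = 1" "0 \<le> \<alpha>" "\<alpha> \<le> 1 / sqrt 2" "0 \<le> \<beta>" "\<beta> \<le> 1 / sqrt 2"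
      "s1 \<in> {1, -1}" "s2 \<in> {1, -1}"
      and v: "v = c *s ket (complex_of_real \<alpha>)
                   (complex_of_real \<beta> * cis \<phi>)
                   (complex_of_real s1 * \<i> * complex_of_real (sqrt (1/2 - \<beta>\<^sup>2)) * cis \<phi>)
                   (complex_of_real s2 * \<i> * complex_of_real (sqrt (1/2 - \<alpha>\<^sup>2)))"
    unfolding optimal_form_def by blast
  have e: "v $ (0,0) = c * (complex_of_real \<alpha> * 1)"
     "v $ (1,1) = c * (complex_of_real s2 * \<i> * complex_of_real (sqrt (1/2 - \<alpha>\<^sup>2)) * 1)"
     "v $ (0,1) = c * (complex_of_real \<beta> * cis \<phi>)"
     "v $ (1,0) = c * (complex_of_real s1 * \<i> * complex_of_real (sqrt (1/2 - \<beta>\<^sup>2)) * cis \<phi>)"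
    using v unfolding ket_eq by simp_all
  show "unif v" unfolding unif_pairs e
    using pairF[of c 1 s2 \<alpha>] pairF[of c "cis \<phi>" s1 \<beta>] h by simp
next
  assume "unif v"
  then have p1: "(cmod (v $ (0,0)))^2 + (cmod (v $ (1,1)))^2 = 1/2" "Re (v $ (0,0) * cnj (v $ (1,1))) = 0"
    and p2: "(cmod (v $ (0,1)))^2 + (cmod (v $ (1,0)))^2 = 1/2" "Re (v $ (0,1) * cnj (v $ (1,0))) = 0"
    unfolding unif_pairs by auto
  obtain \<alpha> c s2 where a: "0 \<le> \<alpha>" "\<alpha> \<le> 1 / sqrt 2" "cmod c = 1" "s2 \<in> {1, -1::real}"
    "v $ (0,0) = complex_of_real \<alpha> * c" "v $ (1,1) = complex_of_real s2 * \<i> * complex_of_real (sqrt (1/2 - \<alpha>\<^sup>2)) * c"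
    using pairB[OF p1] by blast
  have cc: "cnj c * c = 1" using unit_cnj[OF a(3)] .
  have q1: "(cmod (v $ (0,1) * cnj c))^2 + (cmod (v $ (1,0) * cnj c))^2 = 1/2"
    using p2(1) a(3) by (simp add: norm_mult)
  have eq: "(v $ (0,1) * cnj c) * cnj (v $ (1,0) * cnj c) = (v $ (0,1) * cnj (v $ (1,0))) * (cnj c * c)"
    by (simp add: algebra_simps)
  have q2: "Re ((v $ (0,1) * cnj c) * cnj (v $ (1,0) * cnj c)) = 0"
    unfolding eq cc mult_1_right by (rule p2(2))
  obtain \<beta> w s1 where b: "0 \<le> \<beta>" "\<beta> \<le> 1 / sqrt 2" "cmod w = 1" "s1 \<in> {1, -1::real}"
    "v $ (0,1) * cnj c = complex_of_real \<beta> * w" "v $ (1,0) * cnj c = complex_of_real s1 * \<i> * complex_of_real (sqrt (1/2 - \<beta>\<^sup>2)) * w"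
    using pairB[OF q1 q2] by blast
  obtain \<phi> where ph: "0 \<le> \<phi>" "\<phi> < 2 * pi" "w = cis \<phi>" using angle[OF b(3)] by blast
  have r: "x = c * (x * cnj c)" for x using cc by (simp add: algebra_simps)
  have "v $ (0,1) = c * (complex_of_real \<beta> * cis \<phi>)" using r[of "v $ (0,1)"] b(5) ph(3) by simp
  moreover have "v $ (1,0) = c * (complex_of_real s1 * \<i> * complex_of_real (sqrt (1/2 - \<beta>\<^sup>2)) * cis \<phi>)"
    using r[of "v $ (1,0)"] b(6) ph(3) by simp
  moreover have "v $ (0,0) = c * complex_of_real \<alpha>" using a(5) by simp
  moreover have "v $ (1,1) = c * (complex_of_real s2 * \<i> * complex_of_real (sqrt (1/2 - \<alpha>\<^sup>2)))"
    using a(6) by simp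
  ultimately have "v = c *s ket (complex_of_real \<alpha>)
                   (complex_of_real \<beta> * cis \<phi>)
                   (complex_of_real s1 * \<i> * complex_of_real (sqrt (1/2 - \<beta>\<^sup>2)) * cis \<phi>)
                   (complex_of_real s2 * \<i> * complex_of_real (sqrt (1/2 - \<alpha>\<^sup>2)))"
    unfolding ket_eq by simp
  then show "optimal_form v" unfolding optimal_form_def using a b ph by blast
qed


lemma ket_ent[simp]: "ket A B C D $ (0,0) = A" "ket A B C D $ (0,1) = B" "ket A B C D $ (1,0) = C" "ket A B C D $ (1,1) = D"
  by (simp_all add: ket_def)

lemma braket_ket: "braket (ket A B C D) (ket A B C D) = complex_of_real ((cmod A)^2 + (cmod B)^2 + (cmod C)^2 + (cmod D)^2)"
  unfolding braket_def sum_22 ket_ent of_real_add complex_norm_square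
  by (simp add: mult.commute)

lemma part3: "let v = ket (1 / sqrt 2) (cis \<phi> / sqrt 2) 0 0 in
            normalized v \<and> concurrence v = 0 \<and> precision v lam = 3/4 \<and> sloppiness v lam = 1/64"
proof -
  define v where "v = ket (1 / sqrt 2) (cis \<phi> / sqrt 2) 0 0"
  have h2: "(1 / sqrt 2)^2 = (1/2::real)" by (simp add: power_divide)
  have n1: "(cmod (1 / complex_of_real (sqrt 2)))^2 = 1/2" by (simp add: norm_divide power_divide)
  have n2: "(cmod (cis \<phi> / complex_of_real (sqrt 2)))^2 = 1/2" by (simp add: norm_divide power_divide)
  have "(cmod (1 / complex_of_real (sqrt 2)))^2 + (cmod (cis \<phi> / complex_of_real (sqrt 2)))^2 + (cmod (0::complex))^2 + (cmod (0::complex))^2 = 1"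
    using n1 n2 by simp
  then have nv: "normalized v" unfolding normalized_def v_def braket_ket by simp
  have cv: "concurrence v = 0" unfolding concurrence_def v_def by simp
  have uv: "unif v" unfolding unif_pairs v_def ket_ent using n1 n2 by simp
  show ?thesis unfolding Let_def v_def[symmetric] using nv cv uv main_q[OF nv, of lam] by simp
qed


lemma part4: assumes C: "0 \<le> C" "C \<le> (1::real)"
  shows "\<exists>v. normalized v \<and> concurrence v = C \<and> (\<forall>lam. precision v lam = 3/4 \<and> sloppiness v lam = 1/64)"
proof -
  define r where "r = sqrt (1 - C\<^sup>2)"
  have C2: "C\<^sup>2 \<le> 1" using C by (simp add: power_le_one)
  have r0: "0 \<le> r" "r\<^sup>2 = 1 - C\<^sup>2" unfolding r_def using C2 by simp_all
  have r1: "r \<le> 1" unfolding r_def using C by (simp add: real_sqrt_le_1_iff)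
  define u where "u = (1 - r) / 4"
  have u0: "0 \<le> u" "0 \<le> 1/2 - u" unfolding u_def using r0 r1 by simp_all
  define t where "t = sqrt u"
  define t' where "t' = sqrt (1/2 - u)"
  have t2: "t\<^sup>2 = u" "t'\<^sup>2 = 1/2 - u" "0 \<le> t" "0 \<le> t'" unfolding t_def t'_def using u0 by simp_all
  define v where "v = ket (complex_of_real t) (complex_of_real t) (- \<i> * complex_of_real t') (\<i> * complex_of_real t')"
  have m1: "(cmod (complex_of_real t))^2 = u" using t2 by simp
  have m2: "(cmod (- \<i> * complex_of_real t'))^2 = 1/2 - u" "(cmod (\<i> * complex_of_real t'))^2 = 1/2 - u"
    using t2 by (simp_all add: norm_mult)
  have "(cmod (complex_of_real t))^2 + (cmod (complex_of_real t))^2 + (cmod (- \<i> * complex_of_real t'))^2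
      + (cmod (\<i> * complex_of_real t'))^2 = 1" unfolding m1 m2 by simp
  then have nv: "normalized v" unfolding normalized_def v_def braket_ket by simp
  have "(t * t')\<^sup>2 = C\<^sup>2 / 16"
    unfolding power_mult_distrib t2 u_def using r0 by (simp add: field_simps power2_eq_square)
  moreover have "(C / 4)\<^sup>2 = C\<^sup>2 / 16" by (simp add: power_divide)
  ultimately have sq: "(t * t')\<^sup>2 = (C / 4)\<^sup>2" by simp
  have "0 \<le> t * t'" using t2 by simp
  moreover have "0 \<le> C / 4" using C by simp
  ultimately have tt: "t * t' = C / 4" using sq power2_eq_iff_nonneg by blast
  have eq: "complex_of_real t * (\<i> * complex_of_real t') - complex_of_real t * (- \<i> * complex_of_real t')
      = \<i> * complex_of_real (2 * (t * t'))" by (simp add: algebra_simps)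
  have "concurrence v = 2 * cmod (complex_of_real t * (\<i> * complex_of_real t') - complex_of_real t * (- \<i> * complex_of_real t'))"
    unfolding concurrence_def v_def ket_ent ..
  also have "\<dots> = 2 * cmod (\<i> * complex_of_real (2 * (t * t')))" by (simp only: eq)
  also have "\<dots> = C" unfolding tt using C by (simp add: norm_mult)
  finally have cv: "concurrence v = C" .
  have uv: "unif v" unfolding unif_pairs v_def ket_ent using m1 m2 by simp
  show ?thesis using nv cv uv main_q[OF nv] by blast
qed
theorem mainTheorem3:
  shows "(\<forall>psi0 lam. normalized psi0 \<longrightarrow>
            precision psi0 lam \<ge> 3/4 \<and> sloppiness psi0 lam \<ge> 1/64 \<and> det (QFI psi0 lam) \<le> 64)
       \<and> (\<forall>psi0 lam. normalized psi0 \<longrightarrow>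
            (precision psi0 lam = 3/4 \<longleftrightarrow> sloppiness psi0 lam = 1/64)
          \<and> (sloppiness psi0 lam = 1/64 \<longleftrightarrow> optimal_form psi0))
       \<and> (\<forall>\<phi> lam. let v = ket (1 / sqrt 2) (cis \<phi> / sqrt 2) 0 0 in
            normalized v \<and> concurrence v = 0 \<and> precision v lam = 3/4 \<and> sloppiness v lam = 1/64)
       \<and> (\<forall>C. 0 \<le> C \<and> C \<le> 1 \<longrightarrow> (\<exists>v. normalized v \<and> concurrence v = C \<and>
            (\<forall>lam. precision v lam = 3/4 \<and> sloppiness v lam = 1/64)))"
proof (intro conjI)
  show "\<forall>psi0 lam. normalized psi0 \<longrightarrow>
            precision psi0 lam \<ge> 3/4 \<and> sloppiness psi0 lam \<ge> 1/64 \<and> det (QFI psi0 lam) \<le> 64"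
    using main_q(1) by blast
  show "\<forall>psi0 lam. normalized psi0 \<longrightarrow>
            (precision psi0 lam = 3/4 \<longleftrightarrow> sloppiness psi0 lam = 1/64)
          \<and> (sloppiness psi0 lam = 1/64 \<longleftrightarrow> optimal_form psi0)"
    using main_q(2) main_q(3) opt_unif by blast
  show "\<forall>\<phi> lam. let v = ket (1 / sqrt 2) (cis \<phi> / sqrt 2) 0 0 in
            normalized v \<and> concurrence v = 0 \<and> precision v lam = 3/4 \<and> sloppiness v lam = 1/64"
    using part3 by blast
  show "\<forall>C. 0 \<le> C \<and> C \<le> 1 \<longrightarrow> (\<exists>v. normalized v \<and> concurrence v = C \<and>
            (\<forall>lam. precision v lam = 3/4 \<and> sloppiness v lam = 1/64))"
    using part4 by blast
qed

end
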